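(* Let $S,T\subseteq[r]$ with $S$ dominating $T$. Then $h_T(L)\le h_S(L)$ for every geometric lattice $L$ of rank at least $r+1$.
   Context: For a permutation $\pi=a_1\cdots a_{r+1}\in S_{r+1}$ ($a_i=\pi(i)$), its descent set is $\{i\in[r]:a_i>a_{i+1}\}$, and $D(S)$ denotes the set of permutations in $S_{r+1}$ with descent set $S$. The inversion set is $I(\pi)=\{(a_i,a_j): i<j,\ a_i>a_j\}$; the weak Bruhat order is $\pi\le_w\pi'$ iff $I(\pi)\subseteq I(\pi')$. $S$ dominates $T$ if there is an injection $\phi:D(T)\to D(S)$ with $\pi\le_w\phi(\pi)$ for all $\pi\in D(T)$. For a geometric lattice $L$ of rank $N+1$ and $S\subseteq[N]$, $f_S(L)$ is the number of chains of $L$ whose elements have ranks exactly the elements of $S$, and $h_S(L)=\sum_{U\subseteq S}(-1)^{|S|-|U|}f_U(L)$; subsets of $[r]$ are regarded as subsets of $[N]$ when $N\ge r$. *)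

theory Defs
  imports "HOL-Combinatorics.Permutations"
begin

definition descent_set :: "nat \<Rightarrow> (nat \<Rightarrow> nat) \<Rightarrow> nat set" where
  "descent_set r p = {i \<in> {1..r}. p i > p (Suc i)}"

definition perms_with_descents :: "nat \<Rightarrow> nat set \<Rightarrow> (nat \<Rightarrow> nat) set" where
  "perms_with_descents r S = {p. p permutes {1..Suc r} \<and> descent_set r p = S}"

definition inversion_set :: "nat \<Rightarrow> (nat \<Rightarrow> nat) \<Rightarrow> (nat \<times> nat) set" where
  "inversion_set r p = {(p i, p j) | i j. 1 \<le> i \<and> i < j \<and> j \<le> Suc r \<and> p i > p j}"

definition weak_le :: "nat \<Rightarrow> (nat \<Rightarrow> nat) \<Rightarrow> (nat \<Rightarrow> nat) \<Rightarrow> bool" where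
  "weak_le r p q \<longleftrightarrow> inversion_set r p \<subseteq> inversion_set r q"

definition dominates :: "nat \<Rightarrow> nat set \<Rightarrow> nat set \<Rightarrow> bool" where
  "dominates r S T \<longleftrightarrow> (\<exists>\<phi>. inj_on \<phi> (perms_with_descents r T)
       \<and> \<phi> ` perms_with_descents r T \<subseteq> perms_with_descents r S
       \<and> (\<forall>\<pi>\<in>perms_with_descents r T. weak_le r \<pi> (\<phi> \<pi>)))"

definition covers :: "'a::order \<Rightarrow> 'a \<Rightarrow> bool" where
  "covers x y \<longleftrightarrow> x < y \<and> \<not> (\<exists>z. x < z \<and> z < y)"

definition is_atom :: "'a::{order,bot} \<Rightarrow> bool" where
  "is_atom a \<longleftrightarrow> covers bot a"

definition geometric_lattice :: "'a::{finite,complete_lattice} itself \<Rightarrow> bool" where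
  "geometric_lattice _ \<longleftrightarrow>
     (\<forall>x::'a. x = Sup {a. is_atom a \<and> a \<le> x}) \<and>
     (\<forall>x y::'a. covers (inf x y) x \<longrightarrow> covers y (sup x y))"

definition lrank :: "'a::{finite,complete_lattice} \<Rightarrow> nat" where
  "lrank x = Max {card C | C. C \<subseteq> {bot..x} \<and> Complete_Partial_Order.chain (\<le>) C} - 1"

definition flag_f :: "'a::{finite,complete_lattice} itself \<Rightarrow> nat set \<Rightarrow> nat" where
  "flag_f _ S = card {C :: 'a set. Complete_Partial_Order.chain (\<le>) C \<and> lrank ` C = S}"

definition flag_h :: "'a::{finite,complete_lattice} itself \<Rightarrow> nat set \<Rightarrow> int" where
  "flag_h L S = (\<Sum>U\<in>Pow S. (-1) ^ (card S - card U) * int (flag_f L U))"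

end

theory Submission
  imports Defs "HOL-Library.Countable"
begin

inductive sat :: "'a::order \<Rightarrow> 'a \<Rightarrow> nat \<Rightarrow> bool" where
  sat0: "sat a a 0"
| satS: "covers a c \<Longrightarrow> sat c b n \<Longrightarrow> sat a b (Suc n)"

lemma sat_le: "sat a b n \<Longrightarrow> a \<le> b"
  by (induction rule: sat.induct) (auto simp: covers_def)

lemma sat_trans: "sat a b m \<Longrightarrow> sat b c n \<Longrightarrow> sat a c (m + n)"
  by (induction rule: sat.induct) (auto intro: sat.intros)

lemma sat_covers: "covers a b \<Longrightarrow> sat a b 1"
  using satS[OF _ sat0] by simp

lemma sat_0D: "sat a b 0 \<Longrightarrow> a = b"
  by (erule sat.cases) auto

lemma sat_SucD: "sat a b (Suc n) \<Longrightarrow> \<exists>c. covers a c \<and> sat c b n"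
  by (erule sat.cases) auto

lemma sat_pos: "sat a b n \<Longrightarrow> a < b \<Longrightarrow> n > 0"
  by (cases n) (auto dest: sat_0D)

lemma sat_exists:
  fixes a b :: "'a::{finite,order}"
  shows "a \<le> b \<Longrightarrow> \<exists>n. sat a b n"
proof (induction a rule: measure_induct_rule[where f="\<lambda>a. card {z. a \<le> z}"])
  case (less a)
  show ?case
  proof (cases "a = b")
    case True then show ?thesis by (auto intro: sat0)
  next
    case False
    then have ab: "a < b" using less.prems by simp
    have "finite {z. a < z \<and> z \<le> b}" by simp
    moreover have "b \<in> {z. a < z \<and> z \<le> b}" using ab by simp
    ultimately obtain c where c: "c \<in> {z. a < z \<and> z \<le> b}"
      and cmin0: "\<forall>z\<in>{z. a < z \<and> z \<le> b}. z \<le> c \<longrightarrow> c = z"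
      using finite_has_minimal[of "{z. a < z \<and> z \<le> b}"] by blast
    have cmin: "\<And>z. z \<in> {z. a < z \<and> z \<le> b} \<Longrightarrow> \<not> z < c"
      using cmin0 by fastforce
    have cov: "covers a c" unfolding covers_def
    proof (intro conjI notI)
      show "a < c" using c by simp
    next
      assume "\<exists>z. a < z \<and> z < c"
      then obtain z where z: "a < z" "z < c" by blast
      then have "z \<in> {z. a < z \<and> z \<le> b}" using c less_le_trans[OF z(2)] by (auto intro: less_imp_le)
      then show False using cmin z by blast
    qed
    have "{z. c \<le> z} \<subset> {z. a \<le> z}" using c
    proof -
      have "a \<in> {z. a \<le> z}" "a \<notin> {z. c \<le> z}" using c by auto
      moreover have "{z. c \<le> z} \<subseteq> {z. a \<le> z}" using c by (auto intro: order_trans less_imp_le)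
      ultimately show ?thesis by blast
    qed
    then have "card {z. c \<le> z} < card {z. a \<le> z}" by (simp add: psubset_card_mono)
    then obtain n where "sat c b n" using less.IH c by auto
    then show ?thesis using cov by (auto intro: satS)
  qed
qed

lemma sat_Suc_less: "sat a b (Suc n) \<Longrightarrow> a < b"
proof -
  assume "sat a b (Suc n)"
  then obtain c where "covers a c" "sat c b n" using sat_SucD by blast
  then show "a < b" using sat_le[of c b n] unfolding covers_def by (auto intro: less_le_trans)
qed

lemma covers_inf:
  fixes a x y :: "'a::lattice"
  assumes "covers a x" "covers a y" "x \<noteq> y"
  shows "inf x y = a"
proof -
  have ax: "a < x" and ay: "a < y" using assms by (auto simp: covers_def)
  have le: "a \<le> inf x y" using ax ay by (simp add: less_imp_le)
  show ?thesis
  proof (rule ccontr)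
    assume "inf x y \<noteq> a"
    then have "a < inf x y" using le by (simp add: order.strict_iff_order del: le_inf_iff)
    moreover have "inf x y \<le> x" by simp
    ultimately have "inf x y = x" using assms(1) unfolding covers_def
      by (metis order.not_eq_order_implies_strict)
    moreover have "inf x y = y" using \<open>a < inf x y\<close> assms(2) unfolding covers_def
      by (metis inf.cobounded2 order.not_eq_order_implies_strict)
    ultimately show False using assms(3) by simp
  qed
qed

lemma sat_JD:
  fixes a b :: "'a::{finite,lattice}"
  assumes sm: "\<And>x y::'a. covers (inf x y) x \<Longrightarrow> covers y (sup x y)"
  shows "sat a b m \<Longrightarrow> sat a b n \<Longrightarrow> m = n"
proof (induction m arbitrary: a n rule: less_induct)
  case (less m)
  show ?case
  proof (cases m)
    case 0
    then have "a = b" using less.prems sat_0D by auto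
    then show ?thesis using 0 less.prems(2) sat_Suc_less by (cases n) auto
  next
    case (Suc m')
    then have "a < b" using less.prems sat_Suc_less by auto
    then obtain n' where n: "n = Suc n'" using less.prems(2) by (cases n) (auto dest: sat_0D)
    obtain x1 where x1: "covers a x1" "sat x1 b m'" using less.prems(1) Suc sat_SucD by blast
    obtain y1 where y1: "covers a y1" "sat y1 b n'" using less.prems(2) n sat_SucD by blast
    show ?thesis
    proof (cases "x1 = y1")
      case True
      then show ?thesis using less.IH[of m' x1 n'] x1 y1 Suc n by simp
    next
      case False
      have i1: "inf x1 y1 = a" using covers_inf[OF x1(1) y1(1) False] .
      have i2: "inf y1 x1 = a" using i1 by (simp add: inf_commute)
      have c1: "covers x1 (sup x1 y1)" using sm[of y1 x1] i2 y1(1) by (simp add: sup_commute)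
      have c2: "covers y1 (sup x1 y1)" using sm[of x1 y1] i1 x1(1) by simp
      have "sup x1 y1 \<le> b" using sat_le[OF x1(2)] sat_le[OF y1(2)] by simp
      then obtain k where k: "sat (sup x1 y1) b k" using sat_exists[of "sup x1 y1" b] by blast
      have "sat x1 b (Suc k)" using satS[OF c1 k] .
      then have "Suc k = m'" using less.IH[of m' x1 "Suc k"] x1(2) Suc by simp
      have "sat y1 b (Suc k)" using satS[OF c2 k] .
      then have "m' = n'" using less.IH[of m' y1 n'] y1(2) Suc \<open>Suc k = m'\<close> by simp
      then show ?thesis using Suc n by simp
    qed
  qed
qed

lemma sat_chain: "sat a b n \<Longrightarrow> \<exists>C. C \<subseteq> {a..b} \<and> Complete_Partial_Order.chain (\<le>) C \<and> finite C \<and> card C = Suc n"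
proof (induction rule: sat.induct)
  case (sat0 a)
  then show ?case by (intro exI[of _ "{a}"]) (auto simp: chain_def)
next
  case (satS a c b n)
  then obtain C where C: "C \<subseteq> {c..b}" "Complete_Partial_Order.chain (\<le>) C" "finite C" "card C = Suc n" by blast
  have ac: "a < c" using satS(1) by (simp add: covers_def)
  have ab: "a \<le> b" using sat_le[OF satS(2)] ac by simp
  have up: "\<forall>z\<in>C. a < z" using C(1) ac by (meson atLeastAtMost_iff less_le_trans subsetD)
  then have "a \<notin> C" by blast
  moreover have "insert a C \<subseteq> {a..b}" using C(1) up ab by (auto simp: less_imp_le)
  moreover have "Complete_Partial_Order.chain (\<le>) (insert a C)"
    using C(2) up by (auto simp: chain_def less_imp_le)
  ultimately show ?case using C by (intro exI[of _ "insert a C"]) auto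
qed

lemma chain_least:
  fixes C :: "'a::order set"
  assumes "finite C" "C \<noteq> {}" "Complete_Partial_Order.chain (\<le>) C"
  shows "\<exists>c\<in>C. \<forall>z\<in>C. c \<le> z"
proof -
  obtain c where c: "c \<in> C" "\<forall>z\<in>C. z \<le> c \<longrightarrow> c = z"
    using finite_has_minimal[OF assms(1,2)] by blast
  have "\<forall>z\<in>C. c \<le> z"
  proof
    fix z assume "z \<in> C"
    then have "z \<le> c \<or> c \<le> z" using assms(3) c(1) by (auto simp: chain_def)
    then show "c \<le> z" using c \<open>z \<in> C\<close> by auto
  qed
  then show ?thesis using c(1) by blast
qed

lemma chain_card_le:
  fixes a b :: "'a::{finite,lattice}"
  assumes sm: "\<And>x y::'a. covers (inf x y) x \<Longrightarrow> covers y (sup x y)"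
  shows "sat a b m \<Longrightarrow> Complete_Partial_Order.chain (\<le>) C \<Longrightarrow> C \<subseteq> {a..b} \<Longrightarrow> card C \<le> Suc m"
proof (induction "card C" arbitrary: C a m rule: less_induct)
  case less
  show ?case
  proof (cases "C = {}")
    case True then show ?thesis by simp
  next
    case False
    obtain c0 where c0: "c0 \<in> C" "\<forall>z\<in>C. c0 \<le> z" using chain_least[OF _ False less.prems(2)] by auto
    let ?C' = "C - {c0}"
    have cardC: "card C = Suc (card ?C')" using c0(1) by (metis card_Suc_Diff1 finite)
    show ?thesis
    proof (cases "?C' = {}")
      case True then have "card ?C' = 0" by (metis card.empty)
      then show ?thesis using cardC by linarith
    next
      case False
      have ch': "Complete_Partial_Order.chain (\<le>) ?C'" using less.prems(2) chain_subset by blast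
      obtain d where d: "d \<in> ?C'" "\<forall>z\<in>?C'. d \<le> z" using chain_least[OF _ False ch'] by auto
      have c0d: "c0 < d" using d c0 by (auto simp: order.strict_iff_order)
      obtain k where k: "sat c0 d k" using sat_exists[of c0 d] less_imp_le[OF c0d] by blast
      obtain k' where "k = Suc k'" using sat_pos[OF k c0d] by (cases k) auto
      then obtain e where e: "covers c0 e" "sat e d k'" using k sat_SucD by blast
      have ed: "e \<le> d" using sat_le[OF e(2)] .
      have db: "d \<le> b" using d less.prems(3) by auto
      have sub: "?C' \<subseteq> {e..b}" 
      proof
        fix z assume z: "z \<in> ?C'"
        then have "d \<le> z" using d(2) by blast
        then have "e \<le> z" using ed by (rule order_trans[rotated])
        moreover have "z \<le> b" using z less.prems(3) by auto
        ultimately show "z \<in> {e..b}" by simp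
      qed
      obtain j where j: "sat e b j" using sat_exists[of e b] order_trans[OF ed db] by blast
      have IH: "card ?C' \<le> Suc j" using less.hyps[of ?C' e j] cardC j ch' sub by simp
      have ac0: "a \<le> c0" using c0(1) less.prems(3) by auto
      obtain p where p: "sat a c0 p" using sat_exists[of a c0] ac0 by blast
      have "sat a b (p + Suc j)" using sat_trans[OF p satS[OF e(1) j]] .
      then have "m = p + Suc j" using sat_JD[OF sm less.prems(1)] by blast
      then show ?thesis using IH cardC by simp
    qed
  qed
qed

lemma lrank_sat:
  fixes x :: "'a::{finite,complete_lattice}"
  assumes sm: "\<And>x y::'a. covers (inf x y) x \<Longrightarrow> covers y (sup x y)"
    and s: "sat bot x n"
  shows "lrank x = n"
proof -
  let ?M = "{card C |C. C \<subseteq> {bot..x} \<and> Complete_Partial_Order.chain (\<le>) C}"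
  have fin: "finite ?M"
  proof -
    have "?M \<subseteq> card ` (UNIV :: 'a set set)" by blast
    moreover have "finite (card ` (UNIV :: 'a set set))" by simp
    ultimately show ?thesis using finite_subset by blast
  qed
  obtain C where C: "C \<subseteq> {bot..x}" "Complete_Partial_Order.chain (\<le>) C" "card C = Suc n"
    using sat_chain[OF s] by blast
  have "Max ?M = Suc n"
  proof (rule Max_eqI[OF fin])
    fix y assume "y \<in> ?M"
    then obtain D where "y = card D" "D \<subseteq> {bot..x}" "Complete_Partial_Order.chain (\<le>) D" by blast
    then show "y \<le> Suc n" using chain_card_le[OF sm s, of D] by simp
  next
    have "Suc n = card C \<and> C \<subseteq> {bot..x} \<and> Complete_Partial_Order.chain (\<le>) C" using C by simp
    then show "Suc n \<in> ?M" by blast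
  qed
  then show ?thesis unfolding lrank_def by simp
qed

definition mina :: "('a::countable \<Rightarrow> bool) \<Rightarrow> 'a" where
  "mina P = arg_min to_nat P"

lemma mina_prop:
  fixes P :: "'a::countable \<Rightarrow> bool"
  assumes "P a"
  shows "P (mina P) \<and> (\<forall>c. P c \<longrightarrow> to_nat (mina P) \<le> to_nat c)"
  unfolding mina_def using arg_min_nat_lemma[of P a to_nat] assms by blast

lemma mina_eq:
  fixes P :: "'a::countable \<Rightarrow> bool"
  assumes "P b" "\<And>c. P c \<Longrightarrow> to_nat b \<le> to_nat c"
  shows "mina P = b"
proof -
  have "P (mina P)" "to_nat (mina P) \<le> to_nat b" using mina_prop[of P b] assms(1) by auto
  moreover have "to_nat b \<le> to_nat (mina P)" using assms(2) \<open>P (mina P)\<close> by blast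
  ultimately show ?thesis by (metis le_antisym to_nat_split)
qed

locale geo =
  fixes dummy :: "'a::{finite,complete_lattice} itself"
  assumes geo: "geometric_lattice dummy"
begin

lemma sm: "covers (inf x y) x \<Longrightarrow> covers y (sup x y)" for x y :: 'a
  using geo unfolding geometric_lattice_def by blast

lemma atomistic: "x = Sup {a. is_atom a \<and> a \<le> x}" for x :: 'a
  using geo unfolding geometric_lattice_def by blast

lemma sat_lrank: "sat x y k \<Longrightarrow> lrank y = lrank x + k" for x y :: 'a
proof -
  assume s: "sat x y k"
  obtain n where n: "sat bot x n" using sat_exists[of bot x] by auto
  have "lrank x = n" using lrank_sat[OF sm n] .
  moreover have "lrank y = n + k" using lrank_sat[OF sm sat_trans[OF n s]] .
  ultimately show ?thesis by simp
qed

lemma lrank_bot: "lrank (bot::'a) = 0"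
  using lrank_sat[OF sm sat0] .

lemma lrank_covers: "covers x y \<Longrightarrow> lrank y = Suc (lrank x)" for x y :: 'a
  using sat_lrank[OF sat_covers] by simp

lemma lrank_less: "x < y \<Longrightarrow> lrank x < lrank y" for x y :: 'a
proof -
  assume xy: "x < y"
  obtain k where k: "sat x y k" using sat_exists[of x y] less_imp_le[OF xy] by blast
  have "k > 0" using sat_pos[OF k xy] .
  then show ?thesis using sat_lrank[OF k] by simp
qed

lemma lrank_eq: "x \<le> y \<Longrightarrow> lrank x = lrank y \<Longrightarrow> x = y" for x y :: 'a
  using lrank_less by (metis order.not_eq_order_implies_strict less_irrefl)

lemma lrank_mono: "x \<le> y \<Longrightarrow> lrank x \<le> lrank y" for x y :: 'a
  using lrank_less by (metis order.not_eq_order_implies_strict order_refl less_imp_le)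

lemma atom_cover:
  fixes a z :: 'a
  assumes a: "is_atom a" and az: "\<not> a \<le> z"
  shows "covers z (sup z a)"
proof -
  have "inf a z \<noteq> a" using az by (metis inf.absorb_iff1)
  then have lt: "inf a z < a" by (simp add: order.strict_iff_order)
  have "inf a z = bot"
  proof (rule ccontr)
    assume "inf a z \<noteq> bot"
    then have "bot < inf a z" by (simp add: bot_less)
    then show False using lt a unfolding is_atom_def covers_def by blast
  qed
  then have "covers (inf a z) a" using a by (simp add: is_atom_def)
  then have "covers z (sup a z)" by (rule sm)
  then show ?thesis by (simp add: sup_commute)
qed

lemma exists_atom:
  fixes y z :: 'a
  assumes "\<not> y \<le> z"
  shows "\<exists>a. is_atom a \<and> a \<le> y \<and> \<not> a \<le> z"
proof (rule ccontr)
  assume "\<not> ?thesis"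
  then have "Sup {a. is_atom a \<and> a \<le> y} \<le> z" by (auto intro: Sup_least)
  then show False using assms atomistic[of y] by simp
qed

lemma exchange:
  fixes a c z :: 'a
  assumes a: "is_atom a" "\<not> a \<le> z" and c: "c \<le> sup z a" "\<not> c \<le> z"
  shows "sup z c = sup z a"
proof -
  have cov: "covers z (sup z a)" using atom_cover[OF a] .
  have "z < sup z c" using c(2) by (metis sup.cobounded2 sup_ge1 order.not_eq_order_implies_strict)
  moreover have "sup z c \<le> sup z a" using c(1) by simp
  ultimately show ?thesis using cov unfolding covers_def
    by (metis order.not_eq_order_implies_strict)
qed

end

lemma mono_chain_nat:
  fixes f :: "nat \<Rightarrow> nat"
  shows "(\<And>i. m \<le> i \<Longrightarrow> i < n \<Longrightarrow> f i \<le> f (Suc i)) \<Longrightarrow> m \<le> n \<Longrightarrow> f m \<le> f n"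
proof (induction n)
  case 0 then show ?case by simp
next
  case (Suc n)
  show ?case
  proof (cases "m = Suc n")
    case True then show ?thesis by simp
  next
    case False
    then have "m \<le> n" using Suc.prems by simp
    then have "f m \<le> f n" using Suc by simp
    also have "f n \<le> f (Suc n)" using Suc.prems(1)[of n] \<open>m \<le> n\<close> by simp
    finally show ?thesis .
  qed
qed

lemma Inf_chain_mem:
  fixes D :: "'a::{finite,complete_lattice} set"
  assumes "D \<noteq> {}" "Complete_Partial_Order.chain (\<le>) D"
  shows "Inf D \<in> D"
proof -
  obtain c where c: "c \<in> D" "\<forall>z\<in>D. c \<le> z" using chain_least[OF _ assms] by auto
  have "Inf D = c" using c by (metis Inf_lower le_Inf_iff order.antisym)
  then show ?thesis using c by simp
qed

locale geor = geo dummy for dummy :: "'a::{finite,complete_lattice} itself" +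
  fixes r :: nat
  assumes rk: "r + 1 \<le> lrank (top::'a)"
begin

definition flag :: "(nat \<Rightarrow> 'a) \<Rightarrow> bool" where
  "flag x \<longleftrightarrow> x \<in> extensional {..r} \<and> x 0 = bot \<and> (\<forall>i<r. covers (x i) (x (Suc i)))"

definition nxt :: "(nat \<Rightarrow> 'a) \<Rightarrow> nat \<Rightarrow> 'a" where
  "nxt x i = (if i \<le> r then x i else top)"

definition lab :: "(nat \<Rightarrow> 'a) \<Rightarrow> nat \<Rightarrow> 'a" where
  "lab x i = mina (\<lambda>a. is_atom a \<and> a \<le> nxt x i \<and> \<not> a \<le> x (i - 1))"

definition Des :: "(nat \<Rightarrow> 'a) \<Rightarrow> nat set" where
  "Des x = {i \<in> {1..r}. to_nat (lab x (Suc i)) < to_nat (lab x i)}"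

lemma flag_rank: "flag x \<Longrightarrow> i \<le> r \<Longrightarrow> lrank (x i) = i"
proof (induction i)
  case 0 then show ?case by (simp add: flag_def lrank_bot)
next
  case (Suc i)
  then have "covers (x i) (x (Suc i))" by (simp add: flag_def)
  then show ?case using Suc lrank_covers by simp
qed

lemma flag_mono: "flag x \<Longrightarrow> i \<le> j \<Longrightarrow> j \<le> r \<Longrightarrow> x i \<le> x j"
proof (induction j)
  case 0 then show ?case by simp
next
  case (Suc j)
  show ?case
  proof (cases "i = Suc j")
    case True then show ?thesis by simp
  next
    case False
    then have "x i \<le> x j" using Suc by simp
    also have "x j \<le> x (Suc j)" using Suc.prems by (simp add: flag_def covers_def less_imp_le)
    finally show ?thesis .
  qed
qed

lemma flag_nxt_less: "flag x \<Longrightarrow> k \<le> r \<Longrightarrow> x k < nxt x (Suc k)"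
proof -
  assume f: "flag x" and k: "k \<le> r"
  show ?thesis
  proof (cases "k < r")
    case True
    then show ?thesis using f by (simp add: flag_def nxt_def covers_def)
  next
    case False
    then have "k = r" using k by simp
    then have "lrank (x k) < lrank (top::'a)" using flag_rank[OF f k] rk by simp
    then have "x k \<noteq> top" by auto
    then show ?thesis using \<open>k = r\<close> by (simp add: nxt_def top.not_eq_extremum)
  qed
qed

lemma nxt_le: "flag x \<Longrightarrow> i \<le> Suc r \<Longrightarrow> j \<le> i \<Longrightarrow> x j \<le> nxt x i"
  by (auto simp: nxt_def intro: flag_mono)

lemma lab_prop:
  assumes f: "flag x" and k: "k \<le> r"
  shows "is_atom (lab x (Suc k)) \<and> lab x (Suc k) \<le> nxt x (Suc k) \<and> \<not> lab x (Suc k) \<le> x k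
     \<and> (\<forall>c. is_atom c \<and> c \<le> nxt x (Suc k) \<and> \<not> c \<le> x k \<longrightarrow> to_nat (lab x (Suc k)) \<le> to_nat c)"
proof -
  have "\<not> nxt x (Suc k) \<le> x k" using flag_nxt_less[OF f k] by (simp add: not_le_imp_less leD)
  then obtain a where "is_atom a \<and> a \<le> nxt x (Suc k) \<and> \<not> a \<le> x k" using exists_atom by blast
  then show ?thesis unfolding lab_def using mina_prop[of "\<lambda>a. is_atom a \<and> a \<le> nxt x (Suc k) \<and> \<not> a \<le> x k" a]
    by simp
qed

lemma lab_eq:
  assumes "is_atom b" "b \<le> nxt x (Suc k)" "\<not> b \<le> x k"
    "\<And>c. is_atom c \<Longrightarrow> c \<le> nxt x (Suc k) \<Longrightarrow> \<not> c \<le> x k \<Longrightarrow> to_nat b \<le> to_nat c"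
  shows "lab x (Suc k) = b"
  unfolding lab_def using assms by (intro mina_eq) auto

lemma flag_step: "flag x \<Longrightarrow> k < r \<Longrightarrow> x (Suc k) = sup (x k) (lab x (Suc k))"
proof -
  assume f: "flag x" and k: "k < r"
  have l: "is_atom (lab x (Suc k))" "lab x (Suc k) \<le> x (Suc k)" "\<not> lab x (Suc k) \<le> x k"
    using lab_prop[OF f, of k] k by (auto simp: nxt_def)
  have cov: "covers (x k) (x (Suc k))" using f k by (simp add: flag_def)
  have "x k < sup (x k) (lab x (Suc k))" using l(3)
    by (metis sup.cobounded2 sup_ge1 order.not_eq_order_implies_strict)
  moreover have "sup (x k) (lab x (Suc k)) \<le> x (Suc k)" using l(2) cov by (simp add: covers_def less_imp_le)
  ultimately show ?thesis using cov unfolding covers_def by (metis order.not_eq_order_implies_strict)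
qed

definition Yc :: "'a set \<Rightarrow> nat \<Rightarrow> 'a" where
  "Yc C k = Inf {c \<in> C. k < lrank c}"

primrec bld :: "'a set \<Rightarrow> nat \<Rightarrow> 'a" where
  "bld C 0 = bot"
| "bld C (Suc k) = sup (bld C k) (mina (\<lambda>a. is_atom a \<and> a \<le> Yc C k \<and> \<not> a \<le> bld C k))"

definition gk :: "'a set \<Rightarrow> nat \<Rightarrow> 'a" where
  "gk C k = mina (\<lambda>a. is_atom a \<and> a \<le> Yc C k \<and> \<not> a \<le> bld C k)"

lemma bld_Suc': "bld C (Suc k) = sup (bld C k) (gk C k)"
  by (simp add: gk_def)

declare bld.simps(2)[simp del]

definition flagof :: "'a set \<Rightarrow> nat \<Rightarrow> 'a" where
  "flagof C = (\<lambda>k. if k \<le> r then bld C k else undefined)"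

context
  fixes C :: "'a set"
  assumes ch: "Complete_Partial_Order.chain (\<le>) C" and rC: "lrank ` C \<subseteq> {1..r}"
begin

lemma Yc_props: "k \<le> r \<Longrightarrow> k < lrank (Yc C k) \<and> (\<forall>c\<in>C. k < lrank c \<longrightarrow> Yc C k \<le> c)"
proof -
  assume k: "k \<le> r"
  let ?D = "{c \<in> C. k < lrank c}"
  have 2: "\<forall>c\<in>C. k < lrank c \<longrightarrow> Yc C k \<le> c"
  proof (intro ballI impI)
    fix c assume "c \<in> C" "k < lrank c"
    then have "c \<in> ?D" by simp
    then show "Yc C k \<le> c" unfolding Yc_def by (rule Inf_lower)
  qed
  show ?thesis
  proof (cases "?D = {}")
    case True
    then have "Yc C k = top" by (simp only: Yc_def True Inf_empty)
    moreover have "k < lrank (top::'a)" using rk k by simp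
    ultimately show ?thesis using 2 by simp
  next
    case False
    have "Complete_Partial_Order.chain (\<le>) ?D" using ch by (rule chain_subset) blast
    from Inf_chain_mem[OF False this] have "Yc C k \<in> ?D" unfolding Yc_def .
    then have "k < lrank (Yc C k)" by simp
    then show ?thesis using 2 by simp
  qed
qed

lemma Yc_r: "Yc C r = top"
proof -
  have e: "{c \<in> C. r < lrank c} = {}" using rC by force
  show ?thesis by (simp only: Yc_def e Inf_empty)
qed

lemma bld_inv: "k \<le> r \<Longrightarrow> lrank (bld C k) = k \<and> (\<forall>c\<in>C. k \<le> lrank c \<longrightarrow> bld C k \<le> c)"
proof (induction k)
  case 0 then show ?case by (simp add: lrank_bot)
next
  case (Suc k)
  then have k: "k \<le> r" by simp
  note IH = Suc.IH[OF k]
  note Y = Yc_props[OF k]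
  have bY: "bld C k \<le> Yc C k" unfolding Yc_def using IH by (auto intro!: Inf_greatest)
  have "\<not> Yc C k \<le> bld C k"
  proof
    assume "Yc C k \<le> bld C k"
    then have "lrank (Yc C k) \<le> lrank (bld C k)" by (rule lrank_mono)
    then show False using Y IH by simp
  qed
  then obtain a where "is_atom a \<and> a \<le> Yc C k \<and> \<not> a \<le> bld C k" using exists_atom by blast
  then have g: "is_atom (gk C k)" "gk C k \<le> Yc C k" "\<not> gk C k \<le> bld C k"
    unfolding gk_def using mina_prop[of "\<lambda>a. is_atom a \<and> a \<le> Yc C k \<and> \<not> a \<le> bld C k" a] by auto
  have cov: "covers (bld C k) (bld C (Suc k))" using atom_cover[OF g(1) g(3)] by (simp add: bld_Suc')
  have "lrank (bld C (Suc k)) = Suc k" using lrank_covers[OF cov] IH by simp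
  moreover have "\<forall>c\<in>C. Suc k \<le> lrank c \<longrightarrow> bld C (Suc k) \<le> c"
  proof (intro ballI impI)
    fix c assume c: "c \<in> C" "Suc k \<le> lrank c"
    then have "Yc C k \<le> c" using Y by simp
    then show "bld C (Suc k) \<le> c" using bY g(2) IH c by (simp add: bld_Suc')
  qed
  ultimately show ?case by simp
qed

lemma bY: "k \<le> r \<Longrightarrow> bld C k \<le> Yc C k"
  unfolding Yc_def using bld_inv by (auto intro!: Inf_greatest)

lemma gk_prop: "k \<le> r \<Longrightarrow> is_atom (gk C k) \<and> gk C k \<le> Yc C k \<and> \<not> gk C k \<le> bld C k \<and>
   (\<forall>c. is_atom c \<and> c \<le> Yc C k \<and> \<not> c \<le> bld C k \<longrightarrow> to_nat (gk C k) \<le> to_nat c)"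
proof -
  assume k: "k \<le> r"
  have "\<not> Yc C k \<le> bld C k"
  proof
    assume "Yc C k \<le> bld C k"
    then have "lrank (Yc C k) \<le> lrank (bld C k)" by (rule lrank_mono)
    then show False using Yc_props[OF k] bld_inv[OF k] by simp
  qed
  then obtain a where "is_atom a \<and> a \<le> Yc C k \<and> \<not> a \<le> bld C k" using exists_atom by blast
  then show ?thesis
    unfolding gk_def using mina_prop[of "\<lambda>a. is_atom a \<and> a \<le> Yc C k \<and> \<not> a \<le> bld C k" a] by auto
qed

lemma flagof_le: "k \<le> r \<Longrightarrow> flagof C k = bld C k"
  by (simp add: flagof_def)

lemma flagof_flag: "flag (flagof C)"
  unfolding flag_def
proof (intro conjI allI impI)
  show "flagof C \<in> extensional {..r}" by (simp add: flagof_def extensional_def)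
  show "flagof C 0 = bot" by (simp add: flagof_def)
  fix i assume i: "i < r"
  have g: "is_atom (gk C i)" "\<not> gk C i \<le> bld C i" using gk_prop i by auto
  show "covers (flagof C i) (flagof C (Suc i))"
    using atom_cover[OF g] i by (simp add: flagof_def bld_Suc')
qed

lemma flagof_img: "flagof C ` (lrank ` C) = C"
proof -
  have e: "bld C (lrank c) = c" if "c \<in> C" for c
  proof -
    have r: "lrank c \<le> r" using rC that by auto
    then have "bld C (lrank c) \<le> c" "lrank (bld C (lrank c)) = lrank c" using bld_inv[OF r] that by auto
    then show ?thesis using lrank_eq by blast
  qed
  have "flagof C (lrank c) = c" if "c \<in> C" for c
    using e[OF that] rC that by (auto simp: flagof_def)
  then show ?thesis by (auto simp: image_iff)
qed

lemma flagof_lab: "k \<le> r \<Longrightarrow> lab (flagof C) (Suc k) = gk C k"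
proof -
  assume k: "k \<le> r"
  note g = gk_prop[OF k]
  have n1: "gk C k \<le> nxt (flagof C) (Suc k)"
    by (simp add: nxt_def flagof_def bld_Suc')
  have n2: "nxt (flagof C) (Suc k) \<le> Yc C k"
  proof (cases "k < r")
    case True
    then show ?thesis using bY[OF k] g by (simp add: nxt_def flagof_def bld_Suc')
  next
    case False
    then have "k = r" using k by simp
    then show ?thesis by (simp add: nxt_def Yc_r)
  qed
  show ?thesis
  proof (rule lab_eq)
    show "is_atom (gk C k)" using g by simp
    show "gk C k \<le> nxt (flagof C) (Suc k)" using n1 .
    show "\<not> gk C k \<le> flagof C k" using g k by (simp add: flagof_def)
    fix c assume "is_atom c" "c \<le> nxt (flagof C) (Suc k)" "\<not> c \<le> flagof C k"
    then show "to_nat (gk C k) \<le> to_nat c" using g n2 k by (auto simp: flagof_def intro: order_trans)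
  qed
qed

lemma flagof_Des: "Des (flagof C) \<subseteq> lrank ` C"
proof
  fix j assume jD: "j \<in> Des (flagof C)"
  then have j: "1 \<le> j" "j \<le> r" and lt: "to_nat (lab (flagof C) (Suc j)) < to_nat (lab (flagof C) j)"
    by (auto simp: Des_def)
  show "j \<in> lrank ` C"
  proof (rule ccontr)
    assume nj: "j \<notin> lrank ` C"
    obtain k where jk: "j = Suc k" using j by (cases j) auto
    have kr: "k \<le> r" "k < r" using j jk by auto
    have l1: "lab (flagof C) j = gk C k" using flagof_lab[OF kr(1)] jk by simp
    have l2: "lab (flagof C) (Suc j) = gk C j" using flagof_lab[OF j(2)] .
    have "{c \<in> C. k < lrank c} = {c \<in> C. j < lrank c}" using nj jk by (auto simp: image_iff)
    then have YY: "Yc C j = Yc C k" by (simp add: Yc_def)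
    note gj = gk_prop[OF j(2)] and gk0 = gk_prop[OF kr(1)]
    have bb: "bld C k \<le> bld C j" using jk by (simp add: bld_Suc')
    have "to_nat (gk C k) \<le> to_nat (gk C j)"
      using gj gk0 YY bb by (metis order_trans)
    moreover have "gk C k \<noteq> gk C j"
    proof
      assume "gk C k = gk C j"
      moreover have "gk C k \<le> bld C j" using jk by (simp add: bld_Suc')
      ultimately show False using gj by simp
    qed
    then have "to_nat (gk C k) \<noteq> to_nat (gk C j)" by (metis to_nat_split)
    ultimately show False using lt l1 l2 by simp
  qed
qed

end

lemma flag_eq_flagof:
  assumes f: "flag x" and U: "U \<subseteq> {1..r}" and D: "Des x \<subseteq> U"
  shows "x = flagof (x ` U)"
proof -
  let ?C = "x ` U"
  have rk_x: "\<And>i. i \<le> r \<Longrightarrow> lrank (x i) = i" using flag_rank[OF f] .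
  have ch: "Complete_Partial_Order.chain (\<le>) ?C"
  proof (rule chainI)
    fix a b assume "a \<in> ?C" "b \<in> ?C"
    then obtain i j where ij: "a = x i" "b = x j" "i \<in> U" "j \<in> U" by blast
    then have "i \<le> r" "j \<le> r" using U by auto
    then show "a \<le> b \<or> b \<le> a" using ij flag_mono[OF f] by (cases "i \<le> j") auto
  qed
  have rC: "lrank ` ?C = U"
  proof -
    have "lrank ` ?C = (\<lambda>u. lrank (x u)) ` U" by (simp add: image_image)
    also have "\<dots> = U" using rk_x U by (auto simp: image_iff) (metis atLeastAtMost_iff subsetD)
    finally show ?thesis .
  qed
  have rC': "lrank ` ?C \<subseteq> {1..r}" using rC U by simp
  have main: "\<forall>k. k \<le> r \<longrightarrow> x k = bld ?C k"
  proof (intro allI)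
    fix k show "k \<le> r \<longrightarrow> x k = bld ?C k"
    proof (induction k)
      case 0 then show ?case using f by (simp add: flag_def)
    next
      case (Suc k)
      show ?case
      proof
        assume sk: "Suc k \<le> r"
        then have IH: "x k = bld ?C k" using Suc by simp
        let ?b = "lab x (Suc k)"
        have kr: "k \<le> r" using sk by simp
        note lp = lab_prop[OF f kr]
        have bx: "?b \<le> x (Suc k)" using lp sk by (simp add: nxt_def)
        have bY: "?b \<le> Yc ?C k" unfolding Yc_def
        proof (rule Inf_greatest)
          fix c assume "c \<in> {c \<in> ?C. k < lrank c}"
          then obtain u where u: "c = x u" "u \<in> U" "k < lrank c" by blast
          have ur: "u \<le> r" using u U by auto
          then have "Suc k \<le> u" using u rk_x by simp
          then have "x (Suc k) \<le> x u" using flag_mono[OF f _ ur] by simp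
          then show "?b \<le> c" using bx u by simp
        qed
        have minc: "to_nat ?b \<le> to_nat c" if c: "is_atom c" "c \<le> Yc ?C k" "\<not> c \<le> x k" for c
        proof -
          define j where "j = (LEAST j. k < j \<and> c \<le> nxt x j)"
          have ex: "k < Suc r \<and> c \<le> nxt x (Suc r)" using kr by (simp add: nxt_def)
          have j1: "k < j \<and> c \<le> nxt x j" unfolding j_def using LeastI[of "\<lambda>j. k < j \<and> c \<le> nxt x j" "Suc r"] ex by blast
          have j2: "j \<le> Suc r" unfolding j_def using Least_le[of "\<lambda>j. k < j \<and> c \<le> nxt x j" "Suc r"] ex by blast
          have j3: "\<not> c \<le> nxt x i" if "k < i" "i < j" for i
            using not_less_Least[of i "\<lambda>j. k < j \<and> c \<le> nxt x j"] that unfolding j_def by blast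
          have notU: "i \<notin> U" if "k < i" "i < j" for i
          proof
            assume iU: "i \<in> U"
            have ir: "i \<le> r" using that j2 by simp
            have "x i \<in> {c \<in> ?C. k < lrank c}" using iU that rk_x[OF ir] by simp
            then have "Yc ?C k \<le> x i" unfolding Yc_def by (rule Inf_lower)
            then have "c \<le> nxt x i" using c(2) ir by (simp add: nxt_def)
            then show False using j3 that by simp
          qed
          obtain j' where jj: "j = Suc j'" using j1 by (cases j) auto
          have j'r: "j' \<le> r" using j2 jj by simp
          have cj': "\<not> c \<le> x j'"
          proof (cases "j' = k")
            case True then show ?thesis using c by simp
          next
            case False
            then have "k < j'" using j1 jj by simp
            then have "\<not> c \<le> nxt x j'" using j3 jj by simp
            then show ?thesis using j'r by (simp add: nxt_def)
          qed
          have "to_nat (lab x (Suc j')) \<le> to_nat c"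
            using lab_prop[OF f j'r] c(1) cj' j1 jj by blast
          moreover have "to_nat (lab x (Suc k)) \<le> to_nat (lab x (Suc j'))"
          proof (rule mono_chain_nat[where f="\<lambda>i. to_nat (lab x i)"])
            fix i assume i: "Suc k \<le> i" "i < Suc j'"
            then have "i \<notin> U" using notU jj by simp
            then have "i \<notin> Des x" using D by blast
            moreover have "i \<in> {1..r}" using i j'r by simp
            ultimately show "to_nat (lab x i) \<le> to_nat (lab x (Suc i))" by (simp add: Des_def)
          next
            show "Suc k \<le> Suc j'" using j1 jj by simp
          qed
          ultimately show ?thesis by simp
        qed
        have "gk ?C k = ?b" unfolding gk_def
        proof (rule mina_eq)
          show "is_atom ?b \<and> ?b \<le> Yc ?C k \<and> \<not> ?b \<le> bld ?C k" using lp bY IH by simp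
          fix c assume "is_atom c \<and> c \<le> Yc ?C k \<and> \<not> c \<le> bld ?C k"
          then show "to_nat ?b \<le> to_nat c" using minc IH by simp
        qed
        then show "x (Suc k) = bld ?C (Suc k)" using flag_step[OF f] sk IH by (simp add: bld_Suc')
      qed
    qed
  qed
  show ?thesis
  proof
    fix k show "x k = flagof ?C k"
    proof (cases "k \<le> r")
      case True then show ?thesis using main by (simp add: flagof_def)
    next
      case False
      then have "x k = undefined" using f unfolding flag_def extensional_def by auto
      then show ?thesis using False by (simp add: flagof_def)
    qed
  qed
qed

lemma finite_flags: "finite {x. flag x}"
proof -
  have "{x. flag x} \<subseteq> PiE {..r} (\<lambda>_. UNIV)" by (auto simp: flag_def PiE_def)
  moreover have "finite (PiE {..r} (\<lambda>_. (UNIV::'a set)))" by (rule finite_PiE) auto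
  ultimately show ?thesis using finite_subset by blast
qed

lemma flag_f_eq:
  assumes U: "U \<subseteq> {1..r}"
  shows "flag_f (L::'a itself) U = card {x. flag x \<and> Des x \<subseteq> U}"
proof -
  have "bij_betw (\<lambda>x. x ` U) {x. flag x \<and> Des x \<subseteq> U} {C :: 'a set. Complete_Partial_Order.chain (\<le>) C \<and> lrank ` C = U}"
  proof (rule bij_betw_byWitness[where f'=flagof])
    show "\<forall>x\<in>{x. flag x \<and> Des x \<subseteq> U}. flagof (x ` U) = x"
      using flag_eq_flagof U by auto
    show "\<forall>C\<in>{C. Complete_Partial_Order.chain (\<le>) C \<and> lrank ` C = U}. flagof C ` U = C"
      using flagof_img U by auto
    show "(\<lambda>x. x ` U) ` {x. flag x \<and> Des x \<subseteq> U} \<subseteq> {C. Complete_Partial_Order.chain (\<le>) C \<and> lrank ` C = U}"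
    proof (clarify)
      fix x assume f: "flag x" and D: "Des x \<subseteq> U"
      have "x = flagof (x ` U)" using flag_eq_flagof[OF f U D] .
      have ch: "Complete_Partial_Order.chain (\<le>) (x ` U)"
      proof (rule chainI)
        fix a b assume "a \<in> x ` U" "b \<in> x ` U"
        then obtain i j where ij: "a = x i" "b = x j" "i \<in> U" "j \<in> U" by blast
        then have "i \<le> r" "j \<le> r" using U by auto
        then show "a \<le> b \<or> b \<le> a" using ij flag_mono[OF f] by (cases "i \<le> j") auto
      qed
      have "lrank ` x ` U = U"
      proof -
        have "lrank ` x ` U = (\<lambda>u. lrank (x u)) ` U" by (simp add: image_image)
        also have "\<dots> = U" using flag_rank[OF f] U by (auto simp: image_iff) (metis atLeastAtMost_iff subsetD)
        finally show ?thesis .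
      qed
      then show "Complete_Partial_Order.chain (\<le>) (x ` U) \<and> lrank ` x ` U = U" using ch by simp
    qed
    show "flagof ` {C. Complete_Partial_Order.chain (\<le>) C \<and> lrank ` C = U} \<subseteq> {x. flag x \<and> Des x \<subseteq> U}"
      using flagof_flag flagof_Des U by auto
  qed
  then show ?thesis unfolding flag_f_def by (simp add: bij_betw_same_card)
qed

lemma Des_sub: "Des x \<subseteq> {1..r}"
  by (auto simp: Des_def)

lemma flag_h_eq:
  assumes S: "S \<subseteq> {1..r}"
  shows "flag_h (L::'a itself) S = int (card {x. flag x \<and> Des x = S})"
proof -
  define f where "f V = int (card {x. flag x \<and> Des x = V})" for V
  define g where "g V = sum f (Pow V)" for V
  have finS: "finite S" using S finite_subset by blast
  have "f S = (\<Sum>T\<in>Pow S. (-1) ^ (card S - card T) * g T)"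
    by (rule inclusion_exclusion_mobius[OF _ finS]) (simp add: g_def)
  moreover have "g T = int (flag_f L T)" if T: "T \<subseteq> S" for T
  proof -
    have TU: "T \<subseteq> {1..r}" using T S by simp
    have finT: "finite T" using T finS finite_subset by blast
    have eq: "{x. flag x \<and> Des x \<subseteq> T} = (\<Union>V\<in>Pow T. {x. flag x \<and> Des x = V})" by auto
    have "card {x. flag x \<and> Des x \<subseteq> T} = (\<Sum>V\<in>Pow T. card {x. flag x \<and> Des x = V})"
      unfolding eq
    proof (rule card_UN_disjoint)
      show "finite (Pow T)" using finT by simp
      show "\<forall>i\<in>Pow T. finite {x. flag x \<and> Des x = i}"
        using finite_flags by (auto intro: finite_subset)
      show "\<forall>i\<in>Pow T. \<forall>j\<in>Pow T. i \<noteq> j \<longrightarrow> {x. flag x \<and> Des x = i} \<inter> {x. flag x \<and> Des x = j} = {}"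
        by auto
    qed
    then show ?thesis using flag_f_eq[OF TU, of L] by (simp add: g_def f_def)
  qed
  ultimately show ?thesis unfolding flag_h_def f_def
    by (metis (no_types, lifting) PowD sum.cong)
qed

end


lemma inv_mem:
  assumes p: "p permutes {1..Suc r}"
  shows "(p i, p j) \<in> inversion_set r p \<longleftrightarrow> 1 \<le> i \<and> i < j \<and> j \<le> Suc r \<and> p j < p i"
proof
  assume "(p i, p j) \<in> inversion_set r p"
  then obtain i' j' where ij: "p i = p i'" "p j = p j'" "1 \<le> i'" "i' < j'" "j' \<le> Suc r" "p j' < p i'"
    unfolding inversion_set_def by blast
  have "i = i'" "j = j'" using ij(1,2) permutes_inj[OF p] by (auto dest: injD)
  then show "1 \<le> i \<and> i < j \<and> j \<le> Suc r \<and> p j < p i" using ij by simp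
next
  assume "1 \<le> i \<and> i < j \<and> j \<le> Suc r \<and> p j < p i"
  then show "(p i, p j) \<in> inversion_set r p" unfolding inversion_set_def by blast
qed

lemma inv_elem:
  "(u, v) \<in> inversion_set r p \<Longrightarrow> \<exists>i j. 1 \<le> i \<and> i < j \<and> j \<le> Suc r \<and> p j < p i \<and> u = p i \<and> v = p j"
  unfolding inversion_set_def by blast

lemma strict_chain_nat:
  fixes f :: "nat \<Rightarrow> nat"
  assumes "\<And>i. m \<le> i \<Longrightarrow> i < n \<Longrightarrow> f i < f (Suc i)" "m < n"
  shows "f m < f n"
  using assms
proof (induction n)
  case 0 then show ?case by simp
next
  case (Suc n)
  show ?case
  proof (cases "m = n")
    case True then show ?thesis using Suc.prems(1)[of n] by simp
  next
    case False
    then have "m < n" using Suc.prems by simp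
    then have "f m < f n" using Suc by simp
    also have "f n < f (Suc n)" using Suc.prems(1)[of n] \<open>m < n\<close> by simp
    finally show ?thesis .
  qed
qed

lemma perm_diff_pair:
  assumes pi: "\<pi> permutes {1..Suc r}" and sg: "\<sigma> permutes {1..Suc r}"
    and sub: "inversion_set r \<pi> \<subseteq> inversion_set r \<sigma>" and ne: "\<pi> \<noteq> \<sigma>"
  shows "\<exists>q. q \<in> inversion_set r \<sigma> \<and> q \<notin> inversion_set r \<pi>"
proof -
  obtain j1 where "\<pi> j1 \<noteq> \<sigma> j1" using ne by auto
  define j0 where "j0 = (LEAST j. \<pi> j \<noteq> \<sigma> j)"
  have d0: "\<pi> j0 \<noteq> \<sigma> j0" unfolding j0_def using LeastI[of "\<lambda>j. \<pi> j \<noteq> \<sigma> j" j1] \<open>\<pi> j1 \<noteq> \<sigma> j1\<close> by blast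
  have eqb: "\<pi> j = \<sigma> j" if "j < j0" for j using not_less_Least[of j "\<lambda>j. \<pi> j \<noteq> \<sigma> j"] that unfolding j0_def by blast
  have j0I: "j0 \<in> {1..Suc r}"
    using d0 permutes_not_in[OF pi] permutes_not_in[OF sg] by fastforce
  let ?u = "\<pi> j0" and ?w = "\<sigma> j0"
  define p where "p = inv \<sigma> ?u"
  define q where "q = inv \<pi> ?w"
  have sp: "\<sigma> p = ?u" unfolding p_def using permutes_inverses[OF sg] by simp
  have pq: "\<pi> q = ?w" unfolding q_def using permutes_inverses[OF pi] by simp
  have uI: "?u \<in> {1..Suc r}" using j0I permutes_in_image[OF pi] by blast
  have wI: "?w \<in> {1..Suc r}" using j0I permutes_in_image[OF sg] by blast
  have pI: "p \<in> {1..Suc r}" using sp uI permutes_in_image[OF sg] by metis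
  have qI: "q \<in> {1..Suc r}" using pq wI permutes_in_image[OF pi] by metis
  have "p \<noteq> j0" using sp d0 by auto
  moreover have "\<not> p < j0"
  proof
    assume "p < j0"
    then have "\<pi> p = \<sigma> p" using eqb by blast
    then have "\<pi> p = \<pi> j0" using sp by simp
    then have "p = j0" using permutes_inj[OF pi] by (auto dest: injD)
    then show False using \<open>p < j0\<close> by simp
  qed
  ultimately have pgt: "j0 < p" by simp
  have "q \<noteq> j0" using pq d0 by auto
  moreover have "\<not> q < j0"
  proof
    assume "q < j0"
    then have "\<pi> q = \<sigma> q" using eqb by blast
    then have "\<sigma> q = \<sigma> j0" using pq by simp
    then have "q = j0" using permutes_inj[OF sg] by (auto dest: injD)
    then show False using \<open>q < j0\<close> by simp
  qed
  ultimately have qgt: "j0 < q" by simp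
  show ?thesis
  proof (cases "?u < ?w")
    case True
    have "(\<sigma> j0, \<sigma> p) \<in> inversion_set r \<sigma>"
      using inv_mem[OF sg, of j0 p] j0I pI pgt sp True by simp
    moreover have "(\<pi> q, \<pi> j0) \<notin> inversion_set r \<pi>"
      using inv_mem[OF pi, of q j0] qgt by simp
    ultimately show ?thesis using sp pq by auto
  next
    case False
    then have "?w < ?u" using d0 by simp
    then have "(\<pi> j0, \<pi> q) \<in> inversion_set r \<pi>"
      using inv_mem[OF pi, of j0 q] j0I qI qgt pq by simp
    then have "(\<sigma> p, \<sigma> j0) \<in> inversion_set r \<sigma>" using sub sp pq by auto
    then have False using inv_mem[OF sg, of p j0] pgt by simp
    then show ?thesis ..
  qed
qed

lemma adj_step:
  assumes pi: "\<pi> permutes {1..Suc r}" and sg: "\<sigma> permutes {1..Suc r}"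
    and sub: "inversion_set r \<pi> \<subseteq> inversion_set r \<sigma>" and ne: "\<pi> \<noteq> \<sigma>"
  shows "\<exists>i\<in>{1..r}. \<pi> i < \<pi> (Suc i) \<and> (\<pi> (Suc i), \<pi> i) \<in> inversion_set r \<sigma>"
proof (rule ccontr)
  assume H: "\<not> ?thesis"
  obtain q1 q2 where q: "(q1, q2) \<in> inversion_set r \<sigma>" "(q1, q2) \<notin> inversion_set r \<pi>"
    using perm_diff_pair[OF pi sg sub ne] by auto
  obtain a b where ab: "1 \<le> a" "a < b" "b \<le> Suc r" "\<sigma> b < \<sigma> a" "q1 = \<sigma> a" "q2 = \<sigma> b"
    using inv_elem[OF q(1)] by blast
  let ?u = "\<sigma> a" and ?v = "\<sigma> b"
  define pu where "pu = inv \<pi> ?u"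
  define pv where "pv = inv \<pi> ?v"
  have ppu: "\<pi> pu = ?u" unfolding pu_def using permutes_inverses[OF pi] by simp
  have ppv: "\<pi> pv = ?v" unfolding pv_def using permutes_inverses[OF pi] by simp
  have aI: "a \<in> {1..Suc r}" "b \<in> {1..Suc r}" using ab by auto
  have uI: "?u \<in> {1..Suc r}" "?v \<in> {1..Suc r}" using aI permutes_in_image[OF sg] by blast+
  have puI: "pu \<in> {1..Suc r}" using ppu uI(1) permutes_in_image[OF pi] by metis
  have pvI: "pv \<in> {1..Suc r}" using ppv uI(2) permutes_in_image[OF pi] by metis
  have "pu \<noteq> pv" using ppu ppv ab(4) by auto
  moreover have "\<not> pu < pv"
  proof
    assume "pu < pv"
    then have "(\<pi> pu, \<pi> pv) \<in> inversion_set r \<pi>" using inv_mem[OF pi, of pu pv] puI pvI ab(4) by (simp add: ppu ppv)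
    then show False using q(2) ab(5,6) ppu ppv by simp
  qed
  ultimately have pvu: "pv < pu" by simp
  define sp where "sp = (\<lambda>i. inv \<sigma> (\<pi> i))"
  have spI: "\<sigma> (sp i) = \<pi> i" for i unfolding sp_def using permutes_inverses[OF sg] by simp
  have step: "sp i < sp (Suc i)" if i: "pv \<le> i" "i < pu" for i
  proof -
    have iI: "i \<in> {1..r}" using i pvI puI by auto
    have iI2: "i \<in> {1..Suc r}" "Suc i \<in> {1..Suc r}" using iI by auto
    have pI: "\<pi> i \<in> {1..Suc r}" "\<pi> (Suc i) \<in> {1..Suc r}"
      using iI2 permutes_in_image[OF pi] by simp_all
    have spI2: "sp i \<in> {1..Suc r}" "sp (Suc i) \<in> {1..Suc r}"
      unfolding sp_def using pI permutes_in_image[OF permutes_inv[OF sg]] by simp_all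
    have neq: "sp i \<noteq> sp (Suc i)"
    proof
      assume "sp i = sp (Suc i)"
      then have "\<sigma> (sp i) = \<sigma> (sp (Suc i))" by simp
      then have "\<pi> i = \<pi> (Suc i)" by (simp only: spI)
      with permutes_inj[OF pi] have "i = Suc i" by (rule injD)
      then show False by simp
    qed
    show ?thesis
    proof (cases "\<pi> i < \<pi> (Suc i)")
      case True
      then have "(\<pi> (Suc i), \<pi> i) \<notin> inversion_set r \<sigma>" using H iI by blast
      then have "(\<sigma> (sp (Suc i)), \<sigma> (sp i)) \<notin> inversion_set r \<sigma>" using spI by simp
      then have "\<not> sp (Suc i) < sp i" using inv_mem[OF sg, of "sp (Suc i)" "sp i"] spI2 True by (auto simp: spI)
      then show ?thesis using neq by simp
    next
      case False
      have "\<pi> i \<noteq> \<pi> (Suc i)"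
      proof
        assume "\<pi> i = \<pi> (Suc i)"
        with permutes_inj[OF pi] have "i = Suc i" by (rule injD)
        then show False by simp
      qed
      then have lt: "\<pi> (Suc i) < \<pi> i" using False by simp
      then have "(\<pi> i, \<pi> (Suc i)) \<in> inversion_set r \<pi>" using inv_mem[OF pi, of i "Suc i"] iI2 by simp
      then have "(\<sigma> (sp i), \<sigma> (sp (Suc i))) \<in> inversion_set r \<sigma>" using sub spI by auto
      then show ?thesis using inv_mem[OF sg, of "sp i" "sp (Suc i)"] by simp
    qed
  qed
  have "sp pv < sp pu" using strict_chain_nat[of pv pu sp] step pvu by blast
  moreover have "sp pv = b" "sp pu = a" unfolding sp_def using ppu ppv permutes_inverses[OF sg] by auto
  ultimately show False using ab by simp
qed

lemma tr_lt:
  fixes a b i :: nat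
  assumes "a < b" "\<not> (a = i \<and> b = Suc i)"
  shows "Transposition.transpose i (Suc i) a < Transposition.transpose i (Suc i) b"
  using assms by (cases "a = i"; cases "a = Suc i"; cases "b = i"; cases "b = Suc i") simp_all

lemma tr_range:
  fixes a i :: nat
  assumes "1 \<le> i" "i \<le> r" "1 \<le> a" "a \<le> Suc r"
  shows "1 \<le> Transposition.transpose i (Suc i) a \<and> Transposition.transpose i (Suc i) a \<le> Suc r"
  using assms by (cases "a = i"; cases "a = Suc i") simp_all

lemma swap_inv:
  assumes pi: "\<pi> permutes {1..Suc r}" and i: "i \<in> {1..r}" and lt: "\<pi> i < \<pi> (Suc i)"
  shows "inversion_set r (\<pi> \<circ> Transposition.transpose i (Suc i)) = insert (\<pi> (Suc i), \<pi> i) (inversion_set r \<pi>)"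
proof -
  let ?s = "Transposition.transpose i (Suc i)"
  have i1: "1 \<le> i" "i \<le> r" using i by auto
  have s: "?s permutes {1..Suc r}" using i by (intro permutes_swap_id) auto
  have ps: "\<pi> \<circ> ?s permutes {1..Suc r}" using permutes_compose[OF s pi] .
  have e: "\<And>a. ?s (?s a) = a" by (simp add: transpose_def)
  show ?thesis
  proof (intro set_eqI iffI)
    fix q assume "q \<in> inversion_set r (\<pi> \<circ> ?s)"
    then obtain a b where ab: "1 \<le> a" "a < b" "b \<le> Suc r" "\<pi> (?s b) < \<pi> (?s a)" "q = (\<pi> (?s a), \<pi> (?s b))"
      unfolding inversion_set_def by auto
    show "q \<in> insert (\<pi> (Suc i), \<pi> i) (inversion_set r \<pi>)"
    proof (cases "a = i \<and> b = Suc i")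
      case True then show ?thesis using ab by simp
    next
      case False
      have "?s a < ?s b" using tr_lt[OF ab(2) False] .
      moreover have "1 \<le> ?s a" "?s b \<le> Suc r"
        using tr_range[OF i1, of a] tr_range[OF i1, of b] ab by auto
      ultimately have "(\<pi> (?s a), \<pi> (?s b)) \<in> inversion_set r \<pi>"
        using inv_mem[OF pi, of "?s a" "?s b"] ab(4) by simp
      then show ?thesis using ab(5) by simp
    qed
  next
    fix q assume q: "q \<in> insert (\<pi> (Suc i), \<pi> i) (inversion_set r \<pi>)"
    show "q \<in> inversion_set r (\<pi> \<circ> ?s)"
    proof (cases "q = (\<pi> (Suc i), \<pi> i)")
      case True
      have "((\<pi> \<circ> ?s) i, (\<pi> \<circ> ?s) (Suc i)) \<in> inversion_set r (\<pi> \<circ> ?s)"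
        using inv_mem[OF ps, of i "Suc i"] i1 lt by simp
      then show ?thesis using True by simp
    next
      case False
      then have "q \<in> inversion_set r \<pi>" using q by simp
      then obtain a b where ab: "1 \<le> a" "a < b" "b \<le> Suc r" "\<pi> b < \<pi> a" "q = (\<pi> a, \<pi> b)"
        unfolding inversion_set_def by auto
      have nab: "\<not> (a = i \<and> b = Suc i)" using ab lt by auto
      have "?s a < ?s b" using tr_lt[OF ab(2) nab] .
      moreover have "1 \<le> ?s a" "?s b \<le> Suc r"
        using tr_range[OF i1, of a] tr_range[OF i1, of b] ab by auto
      ultimately have "((\<pi> \<circ> ?s) (?s a), (\<pi> \<circ> ?s) (?s b)) \<in> inversion_set r (\<pi> \<circ> ?s)"
        using inv_mem[OF ps, of "?s a" "?s b"] ab(4) by (simp add: e)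
      then show ?thesis using ab(5) by (simp add: e)
    qed
  qed
qed


definition pat :: "nat \<Rightarrow> (nat \<Rightarrow> 'a::countable) \<Rightarrow> nat \<Rightarrow> nat" where
  "pat r l j = (if j \<in> {1..Suc r} then card {i \<in> {1..Suc r}. to_nat (l i) \<le> to_nat (l j)} else j)"

lemma pat_lt:
  fixes l :: "nat \<Rightarrow> 'a::countable"
  assumes inj: "inj_on l {1..Suc r}" and i: "i \<in> {1..Suc r}" and j: "j \<in> {1..Suc r}"
  shows "pat r l i < pat r l j \<longleftrightarrow> to_nat (l i) < to_nat (l j)"
proof
  assume lt: "to_nat (l i) < to_nat (l j)" show "pat r l i < pat r l j"
  proof -
    have "{k \<in> {1..Suc r}. to_nat (l k) \<le> to_nat (l i)} \<subseteq> {k \<in> {1..Suc r}. to_nat (l k) \<le> to_nat (l j)}"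
      using lt by auto
    moreover have "j \<in> {k \<in> {1..Suc r}. to_nat (l k) \<le> to_nat (l j)}" using j by simp
    moreover have "j \<notin> {k \<in> {1..Suc r}. to_nat (l k) \<le> to_nat (l i)}" using lt by simp
    ultimately have "{k \<in> {1..Suc r}. to_nat (l k) \<le> to_nat (l i)} \<subset> {k \<in> {1..Suc r}. to_nat (l k) \<le> to_nat (l j)}"
      by blast
    then show ?thesis using i j by (simp add: pat_def psubset_card_mono)
  qed
next
  assume lt: "pat r l i < pat r l j"
  show "to_nat (l i) < to_nat (l j)"
  proof (rule ccontr)
    assume "\<not> to_nat (l i) < to_nat (l j)"
    then have "{k \<in> {1..Suc r}. to_nat (l k) \<le> to_nat (l j)} \<subseteq> {k \<in> {1..Suc r}. to_nat (l k) \<le> to_nat (l i)}"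
      by auto
    then have "pat r l j \<le> pat r l i" using i j by (simp add: pat_def card_mono)
    then show False using lt by simp
  qed
qed

lemma pat_inj:
  fixes l :: "nat \<Rightarrow> 'a::countable"
  assumes inj: "inj_on l {1..Suc r}"
  shows "inj_on (pat r l) {1..Suc r}"
proof (rule inj_onI)
  fix i j assume i: "i \<in> {1..Suc r}" and j: "j \<in> {1..Suc r}" and e: "pat r l i = pat r l j"
  show "i = j"
  proof (rule ccontr)
    assume "i \<noteq> j"
    then have "l i \<noteq> l j" using inj i j by (auto dest: inj_onD)
    then have "to_nat (l i) \<noteq> to_nat (l j)" by (metis to_nat_split)
    then have "to_nat (l i) < to_nat (l j) \<or> to_nat (l j) < to_nat (l i)" by linarith
    then show False using pat_lt[OF inj i j] pat_lt[OF inj j i] e by auto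
  qed
qed

lemma pat_range:
  fixes l :: "nat \<Rightarrow> 'a::countable"
  assumes j: "j \<in> {1..Suc r}"
  shows "pat r l j \<in> {1..Suc r}"
proof -
  have "j \<in> {i \<in> {1..Suc r}. to_nat (l i) \<le> to_nat (l j)}" using j by simp
  then have "0 < card {i \<in> {1..Suc r}. to_nat (l i) \<le> to_nat (l j)}"
    by (subst card_gt_0_iff) auto
  then have "1 \<le> card {i \<in> {1..Suc r}. to_nat (l i) \<le> to_nat (l j)}" by simp
  moreover have "card {i \<in> {1..Suc r}. to_nat (l i) \<le> to_nat (l j)} \<le> card {1..Suc r}"
    by (rule card_mono) auto
  ultimately show ?thesis using j by (simp add: pat_def)
qed

lemma pat_perm:
  fixes l :: "nat \<Rightarrow> 'a::countable"
  assumes inj: "inj_on l {1..Suc r}"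
  shows "pat r l permutes {1..Suc r}"
proof (rule bij_imp_permutes)
  have sub: "pat r l ` {1..Suc r} \<subseteq> {1..Suc r}" using pat_range by blast
  have "pat r l ` {1..Suc r} = {1..Suc r}"
    using endo_inj_surj[OF _ sub pat_inj[OF inj]] by simp
  then show "bij_betw (pat r l) {1..Suc r} {1..Suc r}" using pat_inj[OF inj] by (simp add: bij_betw_def)
  show "\<And>x. x \<notin> {1..Suc r} \<Longrightarrow> pat r l x = x" unfolding pat_def by (simp only: if_not_P if_False)
qed

lemma pat_cong:
  assumes "\<forall>i\<in>{1..Suc r}. l i = l' i"
  shows "pat r l = pat r l'"
proof
  fix j show "pat r l j = pat r l' j"
  proof (cases "j \<in> {1..Suc r}")
    case True
    then have "{i \<in> {1..Suc r}. to_nat (l i) \<le> to_nat (l j)} = {i \<in> {1..Suc r}. to_nat (l' i) \<le> to_nat (l' j)}"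
      using assms by auto
    then show ?thesis using True by (simp add: pat_def)
  next
    case False then show ?thesis unfolding pat_def by (simp only: if_not_P[OF False] if_False)
  qed
qed

lemma pat_comp:
  fixes l :: "nat \<Rightarrow> 'a::countable"
  assumes tau: "\<tau> permutes {1..Suc r}"
  shows "pat r (l \<circ> \<tau>) = pat r l \<circ> \<tau>"
proof
  fix j show "pat r (l \<circ> \<tau>) j = (pat r l \<circ> \<tau>) j"
  proof (cases "j \<in> {1..Suc r}")
    case True
    then have tj: "\<tau> j \<in> {1..Suc r}" using permutes_in_image[OF tau] by simp
    let ?A = "{i \<in> {1..Suc r}. to_nat (l (\<tau> i)) \<le> to_nat (l (\<tau> j))}"
    let ?B = "{i \<in> {1..Suc r}. to_nat (l i) \<le> to_nat (l (\<tau> j))}"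
    have tin: "\<And>x. \<tau> x \<in> {1..Suc r} \<longleftrightarrow> x \<in> {1..Suc r}" using permutes_in_image[OF tau] .
    have "\<tau> ` ?A = ?B"
    proof (intro set_eqI iffI)
      fix y assume "y \<in> \<tau> ` ?A"
      then obtain x where "x \<in> ?A" "y = \<tau> x" by blast
      then show "y \<in> ?B" using tin[of x] by simp
    next
      fix y assume y: "y \<in> ?B"
      have e: "\<tau> (inv \<tau> y) = y" using permutes_inverses(1)[OF tau] .
      have "inv \<tau> y \<in> {1..Suc r}" using tin[of "inv \<tau> y"] e y by simp
      then have "inv \<tau> y \<in> ?A" using y e by simp
      then show "y \<in> \<tau> ` ?A" using e by (metis imageI)
    qed
    moreover have "inj_on \<tau> ?A" using permutes_inj[OF tau] by (rule inj_on_subset) simp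
    ultimately have "card ?A = card ?B" using card_image[of \<tau> ?A] by simp
    then show ?thesis using True tj by (simp add: pat_def)
  next
    case False
    then have tj: "\<tau> j = j" using permutes_not_in[OF tau] by simp
    show ?thesis unfolding pat_def o_def by (simp only: tj if_not_P[OF False] if_False)
  qed
qed

lemma pat_des:
  fixes l :: "nat \<Rightarrow> 'a::countable"
  assumes inj: "inj_on l {1..Suc r}"
  shows "descent_set r (pat r l) = {i \<in> {1..r}. to_nat (l (Suc i)) < to_nat (l i)}"
proof -
  have "pat r l (Suc i) < pat r l i \<longleftrightarrow> to_nat (l (Suc i)) < to_nat (l i)" if "i \<in> {1..r}" for i
    using pat_lt[OF inj, of "Suc i" i] that by simp
  then show ?thesis unfolding descent_set_def by auto
qed

lemma finite_inv: "finite (inversion_set r p)"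
proof -
  have "inversion_set r p \<subseteq> p ` {1..Suc r} \<times> p ` {1..Suc r}"
  proof
    fix q assume "q \<in> inversion_set r p"
    then obtain i j where "q = (p i, p j)" "1 \<le> i" "i < j" "j \<le> Suc r" unfolding inversion_set_def by blast
    then show "q \<in> p ` {1..Suc r} \<times> p ` {1..Suc r}" by auto
  qed
  then show ?thesis using finite_subset by blast
qed

context geor
begin

lemma lab_local: "nxt y j = nxt x j \<Longrightarrow> y (j - 1) = x (j - 1) \<Longrightarrow> lab y j = lab x j"
  unfolding lab_def by simp

lemma lab_inj: assumes f: "flag x" shows "inj_on (lab x) {1..Suc r}"
proof (rule linorder_inj_onI')
  fix i j assume i: "i \<in> {1..Suc r}" and j: "j \<in> {1..Suc r}" and ij: "i < j"
  obtain j' where jj: "j = Suc j'" using ij by (cases j) auto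
  obtain i' where ii: "i = Suc i'" using i by (cases i) auto
  have j'r: "j' \<le> r" using j jj by simp
  have ir: "i \<le> r" "i \<le> j'" using ij jj j'r by auto
  have "\<not> lab x j \<le> x j'" using lab_prop[OF f j'r] jj by simp
  moreover have "lab x i \<le> x j'"
  proof -
    have "lab x i \<le> nxt x i" using lab_prop[OF f, of i'] ii ir by simp
    also have "nxt x i = x i" using ir by (simp add: nxt_def)
    also have "x i \<le> x j'" using flag_mono[OF f ir(2) j'r] .
    finally show ?thesis .
  qed
  ultimately show "lab x i \<noteq> lab x j" by auto
qed

lemma Des_pat: "flag x \<Longrightarrow> descent_set r (pat r (lab x)) = Des x"
  using pat_des[OF lab_inj] by (simp add: Des_def)

lemma flag_lab_eq:
  assumes fx: "flag x" and fy: "flag y" and e: "\<forall>j\<in>{1..Suc r}. lab x j = lab y j"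
  shows "x = y"
proof -
  have "\<forall>k. k \<le> r \<longrightarrow> x k = y k"
  proof (intro allI)
    fix k show "k \<le> r \<longrightarrow> x k = y k"
    proof (induction k)
      case 0 then show ?case using fx fy by (simp add: flag_def)
    next
      case (Suc k)
      show ?case
      proof
        assume "Suc k \<le> r"
        then show "x (Suc k) = y (Suc k)"
          using flag_step[OF fx] flag_step[OF fy] Suc e by simp
      qed
    qed
  qed
  moreover have "x k = y k" if "\<not> k \<le> r" for k
    using fx fy that unfolding flag_def extensional_def by simp
  ultimately show ?thesis by (metis ext)
qed

lemma swap_flag:
  assumes f: "flag x" and k: "k < r" and lt: "to_nat (lab x (Suc k)) < to_nat (lab x (Suc (Suc k)))"
  shows "\<exists>y. flag y \<and> (\<forall>j\<in>{1..Suc r}. lab y j = lab x (Transposition.transpose (Suc k) (Suc (Suc k)) j))"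
proof -
  define z where "z = x k"
  define a where "a = lab x (Suc k)"
  define b where "b = lab x (Suc (Suc k))"
  have kr: "k \<le> r" "Suc k \<le> r" using k by auto
  note la = lab_prop[OF f kr(1), folded a_def]
  note lb = lab_prop[OF f kr(2), folded b_def]
  have nx1: "nxt x (Suc k) = x (Suc k)" using kr by (simp add: nxt_def)
  have xa: "x (Suc k) = sup z a" using flag_step[OF f k] by (simp add: z_def a_def)
  have at_a: "is_atom a" and a_nz: "\<not> a \<le> z" using la by (auto simp: z_def)
  have at_b: "is_atom b" and b_n1: "\<not> b \<le> x (Suc k)" and b_le: "b \<le> nxt x (Suc (Suc k))" using lb by auto
  have b_nz: "\<not> b \<le> z" using b_n1 xa by (metis le_supI1)
  have a_nle: "\<not> a \<le> sup z b"
  proof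
    assume "a \<le> sup z b"
    then have "sup z a = sup z b" using exchange[OF at_b b_nz _ a_nz] by simp
    then show False using b_n1 xa by simp
  qed
  have c_prop: "\<not> c \<le> x (Suc k)" if c: "is_atom c" "c \<le> sup z b" "\<not> c \<le> z" for c
  proof
    assume "c \<le> x (Suc k)"
    then have "sup z c = sup z a" using exchange[OF at_a a_nz _ c(3)] xa by simp
    moreover have "sup z c = sup z b" using exchange[OF at_b b_nz c(2,3)] .
    ultimately show False using b_n1 xa by (metis sup.cobounded2)
  qed
  define y where "y = x(Suc k := sup z b)"
  have y_other: "y j = x j" if "j \<noteq> Suc k" for j using that by (simp add: y_def)
  have y_k: "y (Suc k) = sup z b" by (simp add: y_def)
  have cov1: "covers z (sup z b)" using atom_cover[OF at_b b_nz] .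
  have fy: "flag y" unfolding flag_def
  proof (intro conjI allI impI)
    show "y \<in> extensional {..r}" using f kr unfolding flag_def extensional_def y_def by auto
    show "y 0 = bot" using f by (simp add: y_def flag_def)
    fix i assume i: "i < r"
    show "covers (y i) (y (Suc i))"
    proof (cases "i = k")
      case True then show ?thesis using cov1 y_k y_other[of k] by (simp add: z_def)
    next
      case False
      show ?thesis
      proof (cases "i = Suc k")
        case True
        have "x (Suc (Suc k)) = sup (x (Suc k)) b" using flag_step[OF f] i True by (simp add: b_def)
        also have "\<dots> = sup (sup z b) a" using xa by (simp add: ac_simps)
        finally have "covers (sup z b) (x (Suc (Suc k)))" using atom_cover[OF at_a a_nle] by simp
        then show ?thesis using True y_k y_other[of "Suc (Suc k)"] by simp
      next
        case False
        then show ?thesis using f i y_other[of i] y_other[of "Suc i"] \<open>i \<noteq> k\<close> by (simp add: flag_def)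
      qed
    qed
  qed
  have nxt_other: "nxt y j = nxt x j" if "j \<noteq> Suc k" for j using that y_other by (simp add: nxt_def)
  have labs: "lab y j = lab x (Transposition.transpose (Suc k) (Suc (Suc k)) j)" if j: "j \<in> {1..Suc r}" for j
  proof (cases "j = Suc k")
    case True
    have "lab y (Suc k) = b"
    proof (rule lab_eq)
      show "is_atom b" using at_b .
      show "b \<le> nxt y (Suc k)" using kr y_k by (simp add: nxt_def)
      show "\<not> b \<le> y k" using b_nz y_other[of k] by (simp add: z_def)
      fix c assume c: "is_atom c" "c \<le> nxt y (Suc k)" "\<not> c \<le> y k"
      have c2: "c \<le> sup z b" "\<not> c \<le> z" using c kr y_k y_other[of k] by (simp_all add: nxt_def z_def)
      have "z \<le> nxt x (Suc (Suc k))" unfolding z_def using nxt_le[OF f, of "Suc (Suc k)" k] kr by simp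
      then have "c \<le> nxt x (Suc (Suc k))" using c2(1) b_le by (meson le_sup_iff order_trans)
      then show "to_nat b \<le> to_nat c" using lb c(1) c_prop[OF c(1) c2] by blast
    qed
    then show ?thesis using True by (simp add: b_def)
  next
    case False
    note nS = False
    show ?thesis
    proof (cases "j = Suc (Suc k)")
      case True
      have "lab y (Suc (Suc k)) = a"
      proof (rule lab_eq)
        show "is_atom a" using at_a .
        have x1: "x (Suc k) \<le> nxt x (Suc (Suc k))" using nxt_le[OF f, of "Suc (Suc k)" "Suc k"] kr by simp
        have a1: "a \<le> x (Suc k)" using la nx1 by simp
        have "a \<le> nxt x (Suc (Suc k))" using order_trans[OF a1 x1] .
        then show "a \<le> nxt y (Suc (Suc k))" using nxt_other[of "Suc (Suc k)"] by simp
        show "\<not> a \<le> y (Suc k)" using a_nle y_k by simp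
        fix c assume c: "is_atom c" "c \<le> nxt y (Suc (Suc k))" "\<not> c \<le> y (Suc k)"
        have c2: "c \<le> nxt x (Suc (Suc k))" "\<not> c \<le> sup z b" using c nxt_other[of "Suc (Suc k)"] y_k by simp_all
        have cz: "\<not> c \<le> z" using c2(2) by (metis le_supI1)
        show "to_nat a \<le> to_nat c"
        proof (cases "c \<le> x (Suc k)")
          case True
          then show ?thesis using la c(1) cz nx1 by (simp add: z_def)
        next
          case False
          then have "to_nat b \<le> to_nat c" using lb c(1) c2(1) by blast
          then show ?thesis using lt by (simp add: a_def b_def)
        qed
      qed
      then show ?thesis using True by (simp add: a_def)
    next
      case False
      have t: "Transposition.transpose (Suc k) (Suc (Suc k)) j = j" using nS False by simp
      have "j - 1 \<noteq> Suc k" using False j by auto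
      then have "lab y j = lab x j" using lab_local[OF nxt_other[OF nS] y_other] by blast
      then show ?thesis using t by simp
    qed
  qed
  show ?thesis using fy labs by blast
qed

lemma upper:
  assumes sg: "\<sigma> permutes {1..Suc r}"
  shows "flag x \<Longrightarrow> weak_le r (pat r (lab x)) \<sigma> \<Longrightarrow>
    \<exists>y \<tau>. flag y \<and> \<tau> permutes {1..Suc r} \<and> (\<forall>j\<in>{1..Suc r}. lab y j = lab x (\<tau> j)) \<and> pat r (lab y) = \<sigma>"
proof (induction "card (inversion_set r \<sigma> - inversion_set r (pat r (lab x)))" arbitrary: x rule: less_induct)
  case less
  note fx = less.prems(1)
  let ?p = "pat r (lab x)"
  have pi: "?p permutes {1..Suc r}" using pat_perm[OF lab_inj[OF fx]] .
  have sub: "inversion_set r ?p \<subseteq> inversion_set r \<sigma>" using less.prems(2) by (simp add: weak_le_def)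
  show ?case
  proof (cases "?p = \<sigma>")
    case True
    have "\<forall>j\<in>{1..Suc r}. lab x j = lab x (id j)" by simp
    then show ?thesis using True fx permutes_id by blast
  next
    case False
    obtain i where i: "i \<in> {1..r}" "?p i < ?p (Suc i)" "(?p (Suc i), ?p i) \<in> inversion_set r \<sigma>"
      using adj_step[OF pi sg sub False] by blast
    have iI: "i \<in> {1..Suc r}" "Suc i \<in> {1..Suc r}" using i(1) by auto
    have lt: "to_nat (lab x i) < to_nat (lab x (Suc i))" using pat_lt[OF lab_inj[OF fx] iI] i(2) by simp
    obtain k where ik: "i = Suc k" using i(1) by (cases i) auto
    have kr: "k < r" using i(1) ik by simp
    let ?s = "Transposition.transpose i (Suc i)"
    obtain y where fy: "flag y" and ly: "\<forall>j\<in>{1..Suc r}. lab y j = lab x (?s j)"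
      using swap_flag[OF fx kr] lt ik by blast
    have s: "?s permutes {1..Suc r}" using iI by (intro permutes_swap_id)
    have "pat r (lab y) = pat r (lab x \<circ> ?s)" using ly by (intro pat_cong) simp
    also have "\<dots> = ?p \<circ> ?s" using pat_comp[OF s] .
    finally have py: "pat r (lab y) = ?p \<circ> ?s" .
    have invy: "inversion_set r (pat r (lab y)) = insert (?p (Suc i), ?p i) (inversion_set r ?p)"
      using swap_inv[OF pi i(1,2)] py by simp
    have notin: "(?p (Suc i), ?p i) \<notin> inversion_set r ?p" using inv_mem[OF pi, of "Suc i" i] by simp
    have eqd: "inversion_set r \<sigma> - inversion_set r (pat r (lab y)) = (inversion_set r \<sigma> - inversion_set r ?p) - {(?p (Suc i), ?p i)}"
      using invy by auto
    have "card (inversion_set r \<sigma> - inversion_set r (pat r (lab y))) < card (inversion_set r \<sigma> - inversion_set r ?p)"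
      unfolding eqd by (rule card_Diff1_less) (use finite_inv i(3) notin in auto)
    moreover have "weak_le r (pat r (lab y)) \<sigma>" using invy sub i(3) by (simp add: weak_le_def)
    ultimately obtain z \<tau>' where z: "flag z" "\<tau>' permutes {1..Suc r}" "\<forall>j\<in>{1..Suc r}. lab z j = lab y (\<tau>' j)" "pat r (lab z) = \<sigma>"
      using less.hyps fy by blast
    have tau: "?s \<circ> \<tau>' permutes {1..Suc r}" using permutes_compose[OF z(2) s] .
    have "\<forall>j\<in>{1..Suc r}. lab z j = lab x ((?s \<circ> \<tau>') j)"
    proof
      fix j assume j: "j \<in> {1..Suc r}"
      then have "\<tau>' j \<in> {1..Suc r}" using permutes_in_image[OF z(2)] by simp
      then show "lab z j = lab x ((?s \<circ> \<tau>') j)" using z(3) ly j by simp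
    qed
    then show ?thesis using z(1,4) tau by blast
  qed
qed

lemma main_ineq:
  assumes dom: "dominates r S T"
  shows "card {x. flag x \<and> Des x = T} \<le> card {x. flag x \<and> Des x = S}"
proof -
  obtain \<phi> where phi_inj: "inj_on \<phi> (perms_with_descents r T)"
    and phi_img: "\<phi> ` perms_with_descents r T \<subseteq> perms_with_descents r S"
    and phi_le: "\<forall>\<pi>\<in>perms_with_descents r T. weak_le r \<pi> (\<phi> \<pi>)"
    using dom unfolding dominates_def by blast
  let ?AT = "{x. flag x \<and> Des x = T}" and ?AS = "{x. flag x \<and> Des x = S}"
  let ?Q = "\<lambda>x y. \<exists>\<tau>. flag y \<and> \<tau> permutes {1..Suc r} \<and> (\<forall>j\<in>{1..Suc r}. lab y j = lab x (\<tau> j)) \<and> pat r (lab y) = \<phi> (pat r (lab x))"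
  define \<Psi> where "\<Psi> x = (SOME y. ?Q x y)" for x
  have pT: "pat r (lab x) \<in> perms_with_descents r T" if "x \<in> ?AT" for x
    using that pat_perm[OF lab_inj] Des_pat by (simp add: perms_with_descents_def)
  have Q: "?Q x (\<Psi> x)" if x: "x \<in> ?AT" for x
  proof -
    have "\<phi> (pat r (lab x)) \<in> perms_with_descents r S" using phi_img pT[OF x] by blast
    then have sg: "\<phi> (pat r (lab x)) permutes {1..Suc r}" by (simp add: perms_with_descents_def)
    have "\<exists>y. ?Q x y" using upper[OF sg] x phi_le pT[OF x] by blast
    then show ?thesis unfolding \<Psi>_def by (rule someI_ex)
  qed
  have img: "\<Psi> ` ?AT \<subseteq> ?AS"
  proof
    fix y assume "y \<in> \<Psi> ` ?AT"
    then obtain x where x: "x \<in> ?AT" "y = \<Psi> x" by blast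
    obtain \<tau> where fy: "flag y" and py: "pat r (lab y) = \<phi> (pat r (lab x))" using Q[OF x(1)] x(2) by blast
    have "\<phi> (pat r (lab x)) \<in> perms_with_descents r S" using phi_img pT[OF x(1)] by blast
    then have "descent_set r (pat r (lab y)) = S" using py by (simp add: perms_with_descents_def)
    then show "y \<in> ?AS" using fy Des_pat[OF fy] by simp
  qed
  have inj: "inj_on \<Psi> ?AT"
  proof (rule inj_onI)
    fix x x' assume x: "x \<in> ?AT" and x': "x' \<in> ?AT" and e: "\<Psi> x = \<Psi> x'"
    let ?y = "\<Psi> x"
    obtain \<tau> where t: "flag ?y" "\<tau> permutes {1..Suc r}" "\<forall>j\<in>{1..Suc r}. lab ?y j = lab x (\<tau> j)" "pat r (lab ?y) = \<phi> (pat r (lab x))"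
      using Q[OF x] by blast
    obtain \<tau>' where t': "\<tau>' permutes {1..Suc r}" "\<forall>j\<in>{1..Suc r}. lab ?y j = lab x' (\<tau>' j)" "pat r (lab ?y) = \<phi> (pat r (lab x'))"
      using Q[OF x'] e by auto
    have pp: "pat r (lab x) = pat r (lab x')"
      using t(4) t'(3) phi_inj pT[OF x] pT[OF x'] by (metis inj_onD)
    let ?p = "pat r (lab x)"
    have pperm: "?p permutes {1..Suc r}" using pat_perm[OF lab_inj] x by simp
    have "pat r (lab ?y) = pat r (lab x \<circ> \<tau>)" using t(3) by (intro pat_cong) simp
    also have "\<dots> = ?p \<circ> \<tau>" using pat_comp[OF t(2)] .
    finally have c1: "pat r (lab ?y) = ?p \<circ> \<tau>" .
    have "pat r (lab ?y) = pat r (lab x' \<circ> \<tau>')" using t'(2) by (intro pat_cong) simp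
    also have "\<dots> = ?p \<circ> \<tau>'" using pat_comp[OF t'(1)] pp by simp
    finally have c2: "pat r (lab ?y) = ?p \<circ> \<tau>'" .
    have tt: "\<tau> j = \<tau>' j" for j
    proof -
      have "?p (\<tau> j) = ?p (\<tau>' j)" using c1 c2 by (metis comp_apply)
      with permutes_inj[OF pperm] show ?thesis by (rule injD)
    qed
    have "\<forall>k\<in>{1..Suc r}. lab x k = lab x' k"
    proof
      fix k assume k: "k \<in> {1..Suc r}"
      define j where "j = inv \<tau> k"
      have tj: "\<tau> j = k" unfolding j_def using permutes_inverses(1)[OF t(2)] .
      have jI: "j \<in> {1..Suc r}" using k tj permutes_in_image[OF t(2), of j] by simp
      show "lab x k = lab x' k" using t(3) t'(2) jI tj tt[of j] by metis
    qed
    then show "x = x'" using flag_lab_eq x x' by blast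
  qed
  have fin: "finite ?AS" using finite_flags by (auto intro: finite_subset)
  show ?thesis using card_inj_on_le[OF inj img fin] .
qed

end

theorem proposition5p2:
  fixes r :: nat and S T :: "nat set" and L :: "'a::{finite,complete_lattice} itself"
  assumes "S \<subseteq> {1..r}" and "T \<subseteq> {1..r}"
    and "dominates r S T"
    and "geometric_lattice L"
    and "lrank (top :: 'a) \<ge> r + 1"
  shows "flag_h L T \<le> flag_h L S"
proof -
  interpret G: geor L r using assms(4,5) by unfold_locales auto
  have "flag_h L T = int (card {x. G.flag x \<and> G.Des x = T})" using G.flag_h_eq[OF assms(2)] .
  also have "\<dots> \<le> int (card {x. G.flag x \<and> G.Des x = S})" using G.main_ineq[OF assms(3)] by simp
  also have "\<dots> = flag_h L S" using G.flag_h_eq[OF assms(1)] by simp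
  finally show ?thesis .
qed

end
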